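(* Let $G=(V,E)$ and $H=(U,F)$ be finite simple graphs, each with $n$ vertices. Then the uniqueness tree algorithm (tree generation stage followed by tree comparison stage, as described in the context) applied to $G$ and $H$ runs in time $O(n^7)$ in the worst case.
   Context: A simple graph is a finite, unweighted, undirected graph with no loops or multiple edges; the size $n$ of a graph is its number of vertices. The uniqueness tree algorithm, applied to two graphs $G=(V,E)$ and $H=(U,F)$ of size $n$, consists of two stages. Tree generation stage: for each graph and each vertex $v$ of it, build a rooted tree $T(v)$ whose nodes are labelled by vertices of the graph, level by level. Level $0$ consists of the root, labelled $v$. Given the current level, a node of that level is called unique if its label occurs exactly once among the labels of the nodes of that level. Each non-unique node becomes a leaf (no children); each unique node labelled $u$ receives one child for each neighbour $w$ of $u$ in the graph, labelled $w$; these children form the next level. This is repeated while some node on the current level is unique and the height of $T(v)$ is less than $n$. Tree comparison stage: initially no vertex is mapped. For each unmapped $v\in V$ and, in turn, each unmapped $u\in U$, declare $v$ and $u$ equivalent unless one of the following holds: the heights of $T(v)$ and $T(u)$ differ; for some level, the numbers of nodes on that level of $T(v)$ and $T(u)$ differ; for some level and some $i\in\{1,\dots,n-1\}$, the number of nodes on that level having exactly $i$ children differs between $T(v)$ and $T(u)$. If $v$ and $u$ are equivalent, mark both as mapped (map $v$ onto $u$). At the end, output "$G\cong H$" if all vertices of $V$ and $U$ have been mapped, and "$G\not\cong H$" otherwise. *)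

theory Defs
  imports Main "HOL-Library.Time_Functions" "HOL-Library.Landau_Symbols"
begin

text \<open>A simple graph of size n has vertex set {0..<n}; adj ! u is the list of
neighbours of u (distinct, in range, no loops, symmetric).\<close>

definition simple_graph_adj :: "nat \<Rightarrow> nat list list \<Rightarrow> bool" where
  "simple_graph_adj n adj \<longleftrightarrow> length adj = n \<and>
     (\<forall>u<n. distinct (adj ! u) \<and> set (adj ! u) \<subseteq> {..<n} \<and> u \<notin> set (adj ! u)) \<and>
     (\<forall>u<n. \<forall>w<n. w \<in> set (adj ! u) \<longleftrightarrow> u \<in> set (adj ! w))"

text \<open>A tree is the list of its levels; a level is the list of its nodes,
each node given as (label, number of children).\<close>

fun cnt :: "nat \<Rightarrow> nat list \<Rightarrow> nat" where
  "cnt x [] = 0"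
| "cnt x (y # ys) = (if x = y then Suc (cnt x ys) else cnt x ys)"
fun T_cnt :: "nat \<Rightarrow> nat list \<Rightarrow> nat" where
  "T_cnt x [] = 1"
| "T_cnt x (y # ys) = (if x = y then T_cnt x ys else T_cnt x ys) + 1"

fun any_unique :: "nat list \<Rightarrow> nat list \<Rightarrow> bool" where
  "any_unique L [] = False"
| "any_unique L (x # xs) = (if cnt x L = 1 then True else any_unique L xs)"
fun T_any_unique :: "nat list \<Rightarrow> nat list \<Rightarrow> nat" where
  "T_any_unique L [] = 1"
| "T_any_unique L (x # xs) = T_cnt x L + (if cnt x L = 1 then 0 else T_any_unique L xs) + 1"

fun next_level :: "nat list list \<Rightarrow> nat list \<Rightarrow> nat list \<Rightarrow> nat list" where
  "next_level adj L [] = []"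
| "next_level adj L (x # xs) =
     (if cnt x L = 1 then adj ! x @ next_level adj L xs else next_level adj L xs)"
fun T_next_level :: "nat list list \<Rightarrow> nat list \<Rightarrow> nat list \<Rightarrow> nat" where
  "T_next_level adj L [] = 1"
| "T_next_level adj L (x # xs) = T_cnt x L +
     (if cnt x L = 1 then T_nth adj x + T_append (adj ! x) (next_level adj L xs) + T_next_level adj L xs
      else T_next_level adj L xs) + 1"

fun annotate :: "nat list list \<Rightarrow> nat list \<Rightarrow> nat list \<Rightarrow> (nat \<times> nat) list" where
  "annotate adj L [] = []"
| "annotate adj L (x # xs) =
     (if cnt x L = 1 then (x, length (adj ! x)) # annotate adj L xs
      else (x, 0) # annotate adj L xs)"
fun T_annotate :: "nat list list \<Rightarrow> nat list \<Rightarrow> nat list \<Rightarrow> nat" where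
  "T_annotate adj L [] = 1"
| "T_annotate adj L (x # xs) = T_cnt x L +
     (if cnt x L = 1 then T_nth adj x + T_length (adj ! x) + T_annotate adj L xs
      else T_annotate adj L xs) + 1"

fun leaves :: "nat list \<Rightarrow> (nat \<times> nat) list" where
  "leaves [] = []"
| "leaves (x # xs) = (x, 0) # leaves xs"
fun T_leaves :: "nat list \<Rightarrow> nat" where
  "T_leaves [] = 1"
| "T_leaves (x # xs) = T_leaves xs + 1"

text \<open>gen adj k L: grow the tree from current level L, where k is the number
of further levels still allowed (n minus the current height).\<close>

fun gen :: "nat list list \<Rightarrow> nat \<Rightarrow> nat list \<Rightarrow> (nat \<times> nat) list list" where
  "gen adj 0 L = [leaves L]"
| "gen adj (Suc k) L =
     (if any_unique L L then annotate adj L L # gen adj k (next_level adj L L)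
      else [leaves L])"
fun T_gen :: "nat list list \<Rightarrow> nat \<Rightarrow> nat list \<Rightarrow> nat" where
  "T_gen adj 0 L = T_leaves L + 1"
| "T_gen adj (Suc k) L = T_any_unique L L +
     (if any_unique L L then T_annotate adj L L + T_next_level adj L L + T_gen adj k (next_level adj L L)
      else T_leaves L) + 1"

fun utree :: "nat list list \<Rightarrow> nat \<Rightarrow> nat \<Rightarrow> (nat \<times> nat) list list" where
  "utree adj n v = gen adj n [v]"
fun T_utree :: "nat list list \<Rightarrow> nat \<Rightarrow> nat \<Rightarrow> nat" where
  "T_utree adj n v = T_gen adj n [v] + 1"

fun gen_trees :: "nat list list \<Rightarrow> nat \<Rightarrow> nat \<Rightarrow> (nat \<times> nat) list list list
                    \<Rightarrow> (nat \<times> nat) list list list" where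
  "gen_trees adj n 0 acc = acc"
| "gen_trees adj n (Suc k) acc = gen_trees adj n k (utree adj n k # acc)"
fun T_gen_trees :: "nat list list \<Rightarrow> nat \<Rightarrow> nat \<Rightarrow> (nat \<times> nat) list list list \<Rightarrow> nat" where
  "T_gen_trees adj n 0 acc = 1"
| "T_gen_trees adj n (Suc k) acc = T_utree adj n k + T_gen_trees adj n k (utree adj n k # acc) + 1"

fun count_children :: "nat \<Rightarrow> (nat \<times> nat) list \<Rightarrow> nat" where
  "count_children i [] = 0"
| "count_children i (p # ps) =
     (if snd p = i then Suc (count_children i ps) else count_children i ps)"
fun T_count_children :: "nat \<Rightarrow> (nat \<times> nat) list \<Rightarrow> nat" where
  "T_count_children i [] = 1"
| "T_count_children i (p # ps) = T_snd p + T_count_children i ps + 1"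

fun check_is :: "nat \<Rightarrow> (nat \<times> nat) list \<Rightarrow> (nat \<times> nat) list \<Rightarrow> bool" where
  "check_is 0 a b = True"
| "check_is (Suc i) a b =
     (if count_children (Suc i) a = count_children (Suc i) b then check_is i a b else False)"
fun T_check_is :: "nat \<Rightarrow> (nat \<times> nat) list \<Rightarrow> (nat \<times> nat) list \<Rightarrow> nat" where
  "T_check_is 0 a b = 1"
| "T_check_is (Suc i) a b = T_count_children (Suc i) a + T_count_children (Suc i) b +
     (if count_children (Suc i) a = count_children (Suc i) b then T_check_is i a b else 0) + 1"

fun levels_ok :: "nat \<Rightarrow> (nat \<times> nat) list list \<Rightarrow> (nat \<times> nat) list list \<Rightarrow> bool" where
  "levels_ok n [] [] = True"
| "levels_ok n (a # as) (b # bs) =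
     (if length a = length b then (if check_is (n - 1) a b then levels_ok n as bs else False)
      else False)"
| "levels_ok n [] (b # bs) = False"
| "levels_ok n (a # as) [] = False"
fun T_levels_ok :: "nat \<Rightarrow> (nat \<times> nat) list list \<Rightarrow> (nat \<times> nat) list list \<Rightarrow> nat" where
  "T_levels_ok n [] [] = 1"
| "T_levels_ok n (a # as) (b # bs) = T_length a + T_length b +
     (if length a = length b
      then T_check_is (n - 1) a b + (if check_is (n - 1) a b then T_levels_ok n as bs else 0)
      else 0) + 1"
| "T_levels_ok n [] (b # bs) = 1"
| "T_levels_ok n (a # as) [] = 1"

fun equiv_trees :: "nat \<Rightarrow> (nat \<times> nat) list list \<Rightarrow> (nat \<times> nat) list list \<Rightarrow> bool" where
  "equiv_trees n T S = (if length T = length S then levels_ok n T S else False)"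
fun T_equiv_trees :: "nat \<Rightarrow> (nat \<times> nat) list list \<Rightarrow> (nat \<times> nat) list list \<Rightarrow> nat" where
  "T_equiv_trees n T S = T_length T + T_length S +
     (if length T = length S then T_levels_ok n T S else 0) + 1"

text \<open>match_one n T Ss: scan the still unmapped trees Ss of H in turn; map T
onto the first equivalent one (returned flag True) and remove it.\<close>

fun match_one :: "nat \<Rightarrow> (nat \<times> nat) list list \<Rightarrow> (nat \<times> nat) list list list
                    \<Rightarrow> bool \<times> (nat \<times> nat) list list list" where
  "match_one n T [] = (False, [])"
| "match_one n T (S # Ss) =
     (if equiv_trees n T S then (True, Ss)
      else (let r = match_one n T Ss in (fst r, S # snd r)))"
fun T_match_one :: "nat \<Rightarrow> (nat \<times> nat) list list \<Rightarrow> (nat \<times> nat) list list list \<Rightarrow> nat" where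
  "T_match_one n T [] = 1"
| "T_match_one n T (S # Ss) = T_equiv_trees n T S +
     (if equiv_trees n T S then 0
      else T_match_one n T Ss + T_fst (match_one n T Ss) + T_snd (match_one n T Ss)) + 1"

fun compare_all :: "nat \<Rightarrow> (nat \<times> nat) list list list \<Rightarrow> (nat \<times> nat) list list list \<Rightarrow> bool" where
  "compare_all n [] [] = True"
| "compare_all n [] (S # Ss) = False"
| "compare_all n (T # Ts) Ss =
     (let r = match_one n T Ss; rest = compare_all n Ts (snd r) in
      (if fst r then rest else False))"
fun T_compare_all :: "nat \<Rightarrow> (nat \<times> nat) list list list \<Rightarrow> (nat \<times> nat) list list list \<Rightarrow> nat" where
  "T_compare_all n [] [] = 1"
| "T_compare_all n [] (S # Ss) = 1"
| "T_compare_all n (T # Ts) Ss = T_match_one n T Ss + T_snd (match_one n T Ss) +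
     T_compare_all n Ts (snd (match_one n T Ss)) + T_fst (match_one n T Ss) + 1"

text \<open>The whole uniqueness tree algorithm; True means output "G \<cong> H".\<close>

fun uniqueness_tree_alg :: "nat \<Rightarrow> nat list list \<Rightarrow> nat list list \<Rightarrow> bool" where
  "uniqueness_tree_alg n adjG adjH =
     compare_all n (gen_trees adjG n n []) (gen_trees adjH n n [])"
fun T_uniqueness_tree_alg :: "nat \<Rightarrow> nat list list \<Rightarrow> nat list list \<Rightarrow> nat" where
  "T_uniqueness_tree_alg n adjG adjH =
     T_gen_trees adjG n n [] + T_gen_trees adjH n n [] +
     T_compare_all n (gen_trees adjG n n []) (gen_trees adjH n n []) + 1"

text \<open>Worst-case running time over all pairs of simple graphs of size n
(the set is finite, adjacency lists being distinct lists over {0..<n}).\<close>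

definition worst_time :: "nat \<Rightarrow> nat" where
  "worst_time n = Max {T_uniqueness_tree_alg n adjG adjH | adjG adjH.
                         simple_graph_adj n adjG \<and> simple_graph_adj n adjH}"

end

theory Submission imports Defs begin

lemma cnt_le: "cnt x L \<le> length L" by (induction L) auto
lemma T_cnt_eq: "T_cnt x L = length L + 1" by (induction L) auto
lemma cnt_0: "cnt x L = 0 \<longleftrightarrow> x \<notin> set L" by (induction L) auto

lemma T_any_unique_le: "T_any_unique L xs \<le> length xs * (length L + 2) + 1"
  by (induction xs) (auto simp: T_cnt_eq)

lemma next_level_eq: "next_level adj L xs = concat (map ((!) adj) (filter (\<lambda>x. cnt x L = 1) xs))"
  by (induction xs) auto

lemma distinct_filter_gen: "(\<forall>x. P x \<longrightarrow> cnt x xs \<le> 1) \<Longrightarrow> distinct (filter P xs)"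
proof (induction xs)
  case Nil then show ?case by simp
next
  case (Cons y ys)
  have h: "\<forall>x. P x \<longrightarrow> cnt x ys \<le> 1" using Cons.prems by (auto split: if_splits)
  have "y \<notin> set ys" if "P y"
  proof -
    have "cnt y (y#ys) \<le> 1" using Cons.prems that by blast
    then have "cnt y ys = 0" by simp
    then show ?thesis using cnt_0 by blast
  qed
  then show ?case using Cons.IH[OF h] by auto
qed

lemma distinct_filter_unique: "distinct (filter (\<lambda>x. cnt x L = 1) L)"
  by (rule distinct_filter_gen) auto

definition graph_ok :: "nat \<Rightarrow> nat list list \<Rightarrow> bool" where
  "graph_ok n adj \<longleftrightarrow> length adj = n \<and> (\<forall>u<n. set (adj!u) \<subseteq> {..<n} \<and> length (adj!u) \<le> n)"

lemma simple_graph_ok: "simple_graph_adj n adj \<Longrightarrow> graph_ok n adj"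
  unfolding simple_graph_adj_def graph_ok_def
proof (intro conjI allI impI)
  fix u assume a: "length adj = n \<and>
     (\<forall>u<n. distinct (adj ! u) \<and> set (adj ! u) \<subseteq> {..<n} \<and> u \<notin> set (adj ! u)) \<and>
     (\<forall>u<n. \<forall>w<n. w \<in> set (adj ! u) \<longleftrightarrow> u \<in> set (adj ! w))" and u: "u < n"
  then show "set (adj ! u) \<subseteq> {..<n}" by blast
  have "length (adj ! u) = card (set (adj ! u))" using a u by (simp add: distinct_card)
  also have "\<dots> \<le> card {..<n}" using a u by (intro card_mono) auto
  finally show "length (adj ! u) \<le> n" by simp
qed auto

lemma T_next_level_le:
  assumes "graph_ok n adj" shows "set xs \<subseteq> {..<n} \<Longrightarrow> T_next_level adj L xs \<le> length xs * (length L + 2*n + 3) + 1"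
proof (induction xs)
  case Nil then show ?case by simp
next
  case (Cons x xs)
  have x: "x < n" using Cons by auto
  have "T_nth adj x = x + 1" using assms x by (simp add: graph_ok_def T_nth)
  moreover have "length (adj!x) \<le> n" using assms x by (simp add: graph_ok_def)
  ultimately show ?case using Cons by (auto simp: T_cnt_eq T_append)
qed

lemma T_annotate_le:
  assumes "graph_ok n adj" shows "set xs \<subseteq> {..<n} \<Longrightarrow> T_annotate adj L xs \<le> length xs * (length L + 2*n + 3) + 1"
proof (induction xs)
  case Nil then show ?case by simp
next
  case (Cons x xs)
  have x: "x < n" using Cons by auto
  have "T_nth adj x = x + 1" using assms x by (simp add: graph_ok_def T_nth)
  moreover have "length (adj!x) \<le> n" using assms x by (simp add: graph_ok_def)
  ultimately show ?case using Cons by (auto simp: T_cnt_eq T_length)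
qed

lemma length_concat_le: "(\<forall>x\<in>set ys. length (adj!x) \<le> n) \<Longrightarrow> length (concat (map ((!) adj) ys)) \<le> length ys * n"
  by (induction ys) auto

lemma length_next_level:
  assumes "graph_ok n adj" "set L \<subseteq> {..<n}"
  shows "length (next_level adj L L) \<le> n * n"
proof -
  let ?F = "filter (\<lambda>x. cnt x L = 1) L"
  have "length ?F = card (set ?F)" by (rule distinct_card[OF distinct_filter_unique, symmetric])
  also have "\<dots> \<le> card {..<n}" using assms by (intro card_mono) auto
  finally have f: "length ?F \<le> n" by simp
  have "length (next_level adj L L) \<le> length ?F * n" unfolding next_level_eq
    using assms by (intro length_concat_le) (auto simp: graph_ok_def)
  also have "\<dots> \<le> n * n" using f by simp
  finally show ?thesis .
qed

lemma set_next_level: "graph_ok n adj \<Longrightarrow> set xs \<subseteq> {..<n} \<Longrightarrow> set (next_level adj L xs) \<subseteq> {..<n}"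
  by (induction xs) (auto simp: graph_ok_def)

lemma length_annotate[simp]: "length (annotate adj L xs) = length xs" by (induction xs) auto
lemma length_leaves[simp]: "length (leaves xs) = length xs" by (induction xs) auto
lemma T_leaves_eq: "T_leaves xs = length xs + 1" by (induction xs) auto


lemma arith1:
  fixes m n :: nat assumes "m \<le> Suc n * Suc n"
  shows "m * (m + 2*n + 3) \<le> 4 * Suc n ^ 4"
proof -
  have a: "m + 2*n + 3 \<le> 4 * (Suc n * Suc n)" using assms by (simp add: algebra_simps)
  have "m * (m + 2*n + 3) \<le> (Suc n * Suc n) * (4 * (Suc n * Suc n))"
    by (rule mult_le_mono[OF assms a])
  also have "\<dots> = 4 * Suc n ^ 4" by (simp add: power4_eq_xxxx algebra_simps)
  finally show ?thesis .
qed

lemma T_gen_le: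
  assumes g: "graph_ok n adj"
  shows "set L \<subseteq> {..<n} \<Longrightarrow> length L \<le> Suc n * Suc n \<Longrightarrow> T_gen adj k L \<le> (k+1) * (16 * Suc n ^ 4)"
proof (induction k arbitrary: L)
  case 0
  have "Suc n * Suc n \<le> Suc n ^ 4" by (simp add: power4_eq_xxxx)
  then show ?case using 0 by (simp add: T_leaves_eq)
next
  case (Suc k)
  let ?m = "length L"
  have A: "T_any_unique L L \<le> ?m * (?m + 2*n + 3) + 1"
  proof -
    have "?m * (?m + 2) \<le> ?m * (?m + 2*n + 3)" by (intro mult_le_mono2) simp
    then show ?thesis using T_any_unique_le[of L L] by linarith
  qed
  have B: "T_annotate adj L L \<le> ?m * (?m + 2*n + 3) + 1" using T_annotate_le[OF g Suc.prems(1)] .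
  have C: "T_next_level adj L L \<le> ?m * (?m + 2*n + 3) + 1" using T_next_level_le[OF g Suc.prems(1)] .
  have D: "?m * (?m + 2*n + 3) \<le> 4 * Suc n ^ 4" using arith1 Suc.prems(2) by blast
  have E: "T_gen adj k (next_level adj L L) \<le> (k+1) * (16 * Suc n ^ 4)"
    apply (rule Suc.IH)
    using set_next_level[OF g Suc.prems(1)] length_next_level[OF g Suc.prems(1)] by auto
  have "Suc n * Suc n \<le> Suc n ^ 4" by (simp add: power4_eq_xxxx)
  then have F: "T_leaves L \<le> 16 * Suc n ^ 4" using Suc.prems(2)
    by (simp add: T_leaves_eq)
  have "1 \<le> Suc n ^ 4" by simp
  show ?case using A B C D E F \<open>1 \<le> Suc n ^ 4\<close>
    by (cases "any_unique L L"; simp; linarith)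
qed


lemma gen_shape:
  assumes g: "graph_ok n adj"
  shows "set L \<subseteq> {..<n} \<Longrightarrow> length L \<le> Suc n * Suc n \<Longrightarrow>
    length (gen adj k L) \<le> k+1 \<and> (\<forall>a\<in>set (gen adj k L). length a \<le> Suc n * Suc n)"
proof (induction k arbitrary: L)
  case 0 then show ?case by simp
next
  case (Suc k)
  have "length (gen adj k (next_level adj L L)) \<le> k+1 \<and> (\<forall>a\<in>set (gen adj k (next_level adj L L)). length a \<le> Suc n * Suc n)"
    apply (rule Suc.IH)
    using set_next_level[OF g Suc.prems(1)] length_next_level[OF g Suc.prems(1)] by auto
  then show ?case using Suc.prems by auto
qed

lemma gen_trees_eq: "gen_trees adj n k acc = map (utree adj n) [0..<k] @ acc"
  by (induction k arbitrary: acc) auto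

lemma T_gen_trees_le: "(\<forall>v<k. T_utree adj n v \<le> X) \<Longrightarrow> T_gen_trees adj n k acc \<le> k*(X+1)+1"
proof (induction k arbitrary: acc)
  case 0 then show ?case by simp
next
  case (Suc k)
  have "T_gen_trees adj n k (utree adj n k # acc) \<le> k*(X+1)+1" using Suc by auto
  moreover have "T_utree adj n k \<le> X" using Suc.prems by auto
  ultimately show ?case by simp
qed

lemma T_snd_0[simp]: "T_snd p = 0" by (cases p) simp
lemma T_fst_0[simp]: "T_fst p = 0" by (cases p) simp

lemma T_count_children_eq: "T_count_children i a = length a + 1" by (induction a) auto

lemma T_check_is_le: "T_check_is i a b \<le> i*(length a + length b + 3) + 1"
  by (induction i) (auto simp: T_count_children_eq)

lemma T_levels_ok_le:
  "(\<forall>a\<in>set as. length a \<le> M) \<Longrightarrow> (\<forall>b\<in>set bs. length b \<le> M) \<Longrightarrow>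
   T_levels_ok n as bs \<le> length as * (Suc n * (2*M+4)) + 1"
proof (induction n as bs rule: T_levels_ok.induct)
  case (2 n a as b bs)
  have la: "length a \<le> M" and lb: "length b \<le> M" using "2.prems" by auto
  have IH: "length a = length b \<Longrightarrow> check_is (n - 1) a b \<Longrightarrow> T_levels_ok n as bs \<le> length as * (Suc n * (2*M+4)) + 1" using 2 by auto
  have c: "T_check_is (n - 1) a b \<le> (n-1)*(length a + length b + 3) + 1" by (rule T_check_is_le)
  have "(n-1)*(length a + length b + 3) \<le> n * (2*M+4)" by (intro mult_le_mono) (use la lb in auto)
  then have "T_length a + T_length b + T_check_is (n - 1) a b + 1 \<le> Suc n * (2*M+4)"
    using c la lb by (simp add: T_length)
  then show ?case using IH
    by (cases "length a = length b"; cases "check_is (n - 1) a b"; simp add: T_length)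
qed (auto)


lemma six: "(N::nat) * (N * (6*(N*N))) = 6*N^4" by (simp add: power4_eq_xxxx algebra_simps)

lemma two: "1 \<le> (N::nat) \<Longrightarrow> 2*N+4 \<le> 6*N^4"
proof -
  assume a: "1 \<le> N"
  have "N^1 \<le> N^4" by (rule power_increasing) (use a in auto)
  moreover have "1 \<le> N^4" using a by simp
  ultimately show ?thesis by simp
qed

lemma T_equiv_trees_le:
  assumes "length T \<le> Suc n" "length S \<le> Suc n"
    "\<forall>a\<in>set T. length a \<le> Suc n * Suc n" "\<forall>b\<in>set S. length b \<le> Suc n * Suc n"
  shows "T_equiv_trees n T S \<le> 12 * Suc n ^ 4"
proof -
  let ?N = "Suc n"
  have L: "T_levels_ok n T S \<le> length T * (?N * (2*(?N*?N)+4)) + 1"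
    by (rule T_levels_ok_le) (use assms in auto)
  have "length T * (?N * (2*(?N*?N)+4)) \<le> ?N * (?N * (2*(?N*?N)+4))"
    using assms(1) by (rule mult_le_mono1)
  also have "\<dots> \<le> ?N * (?N * (6*(?N*?N)))"
    by (intro mult_le_mono2) simp
  also have "\<dots> = 6 * ?N^4" by (rule six)
  finally have L2: "T_levels_ok n T S \<le> 6 * ?N^4 + 1" using L by linarith
  have "2 * ?N + 4 \<le> 6 * ?N ^ 4" by (rule two) simp
  then show ?thesis using assms(1,2) L2 by (auto simp: T_length)
qed

lemma T_match_one_le:
  "(\<forall>S\<in>set Ss. T_equiv_trees n T S \<le> E) \<Longrightarrow> T_match_one n T Ss \<le> length Ss * (E+1) + 1"
  by (induction Ss) (auto simp: Let_def simp del: T_equiv_trees.simps)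

lemma snd_match_one: "set (snd (match_one n T Ss)) \<subseteq> set Ss \<and> length (snd (match_one n T Ss)) \<le> length Ss"
  by (induction Ss) (auto simp: Let_def)

lemma T_compare_all_le:
  "(\<forall>T\<in>set Ts. \<forall>S\<in>S0. T_equiv_trees n T S \<le> E) \<Longrightarrow> set Ss \<subseteq> S0 \<Longrightarrow> length Ss \<le> K \<Longrightarrow>
   T_compare_all n Ts Ss \<le> length Ts * (K*(E+1)+2) + 1"
proof (induction n Ts Ss rule: T_compare_all.induct)
  case (3 n T Ts Ss)
  have m: "T_match_one n T Ss \<le> length Ss * (E+1) + 1"
    by (rule T_match_one_le) (use "3.prems" in \<open>auto simp del: T_equiv_trees.simps\<close>)
  have "length Ss * (E+1) \<le> K * (E+1)" using "3.prems"(3) by (rule mult_le_mono1)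
  moreover have "T_compare_all n Ts (snd (match_one n T Ss)) \<le> length Ts * (K*(E+1)+2) + 1"
    apply (rule "3.IH")
    using "3.prems" snd_match_one[of n T Ss] by auto
  ultimately show ?case using m by simp
qed auto


lemma T_utree_le:
  assumes g: "graph_ok n adj" and v: "v < n"
  shows "T_utree adj n v \<le> Suc n * (16 * Suc n ^ 4) + 1"
proof -
  have "T_gen adj n [v] \<le> (n+1) * (16 * Suc n ^ 4)"
    by (rule T_gen_le[OF g]) (use v in auto)
  then show ?thesis by simp
qed

lemma utree_shape:
  assumes g: "graph_ok n adj" and v: "v < n"
  shows "length (utree adj n v) \<le> Suc n \<and> (\<forall>a\<in>set (utree adj n v). length a \<le> Suc n * Suc n)"
  using gen_shape[OF g, of "[v]" n] v by auto

lemma arith_final: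
  assumes "n \<le> (N::nat)" "1 \<le> N"
  shows "2*(n*(N * (16 * N ^ 4) + 1 + 1) + 1) + (n*(n*(12*N^4+1)+2)+1) + 1 \<le> 55 * N^6"
proof -
  have "2*(n*(N * (16 * N ^ 4) + 1 + 1) + 1) + (n*(n*(12*N^4+1)+2)+1) + 1
      \<le> 2*(N*(N * (16 * N ^ 4) + 1 + 1) + 1) + (N*(N*(12*N^4+1)+2)+1) + 1"
    using assms(1) by (intro add_mono mult_mono order_refl) auto
  also have "\<dots> = 44 * N^6 + N*N + 6*N + 4"
    by (simp add: algebra_simps power_numeral_reduce)
  also have "\<dots> \<le> 55 * N^6"
  proof -
    have "N^1 \<le> N^6" "N^2 \<le> N^6" using assms(2) by (intro power_increasing; simp)+
    moreover have "1 \<le> N^6" using assms(2) by simp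
    ultimately show ?thesis by (simp add: power2_eq_square)
  qed
  finally show ?thesis .
qed

lemma T_alg_le:
  assumes G: "simple_graph_adj n adjG" and H: "simple_graph_adj n adjH"
  shows "T_uniqueness_tree_alg n adjG adjH \<le> 55 * Suc n ^ 6"
proof -
  have gG: "graph_ok n adjG" and gH: "graph_ok n adjH" using G H simple_graph_ok by auto
  let ?X = "Suc n * (16 * Suc n ^ 4) + 1"
  have tG: "T_gen_trees adjG n n [] \<le> n*(?X+1)+1"
    by (rule T_gen_trees_le) (use T_utree_le[OF gG] in auto)
  have tH: "T_gen_trees adjH n n [] \<le> n*(?X+1)+1"
    by (rule T_gen_trees_le) (use T_utree_le[OF gH] in auto)
  have eq: "\<forall>T\<in>set (gen_trees adjG n n []). \<forall>S\<in>set (gen_trees adjH n n []). T_equiv_trees n T S \<le> 12 * Suc n ^ 4"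
  proof (intro ballI)
    fix T S assume "T \<in> set (gen_trees adjG n n [])" "S \<in> set (gen_trees adjH n n [])"
    then obtain v w where v: "v < n" "T = utree adjG n v" and w: "w < n" "S = utree adjH n w"
      by (auto simp: gen_trees_eq)
    show "T_equiv_trees n T S \<le> 12 * Suc n ^ 4"
      using utree_shape[OF gG v(1)] utree_shape[OF gH w(1)] v(2) w(2)
      by (intro T_equiv_trees_le) auto
  qed
  have tC: "T_compare_all n (gen_trees adjG n n []) (gen_trees adjH n n []) \<le> n * (n*(12 * Suc n ^ 4+1)+2) + 1"
    using T_compare_all_le[OF eq order_refl, of n] by (simp add: gen_trees_eq)
  have "T_uniqueness_tree_alg n adjG adjH \<le> 2*(n*(?X+1)+1) + (n * (n*(12 * Suc n ^ 4+1)+2) + 1) + 1"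
    using tG tH tC by simp
  also have "\<dots> \<le> 55 * Suc n ^ 6" by (rule arith_final) auto
  finally show ?thesis .
qed


lemma worst_time_le: "worst_time n \<le> 55 * Suc n ^ 6"
proof -
  let ?S = "{T_uniqueness_tree_alg n adjG adjH | adjG adjH.
                         simple_graph_adj n adjG \<and> simple_graph_adj n adjH}"
  have sub: "?S \<subseteq> {..55 * Suc n ^ 6}" using T_alg_le by auto
  have fin: "finite ?S" using finite_subset[OF sub] by simp
  have "simple_graph_adj n (replicate n [])" by (simp add: simple_graph_adj_def)
  then have ne: "?S \<noteq> {}" by blast
  show ?thesis unfolding worst_time_def using sub fin ne by (simp add: Max_le_iff subset_iff)
qed

theorem theorem1:
  shows "(\<lambda>n. real (worst_time n)) \<in> O(\<lambda>n. real n ^ 7)"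
proof (rule bigoI[where c = 3520])
  show "\<forall>\<^sub>F n in at_top. norm (real (worst_time n)) \<le> 3520 * norm (real n ^ 7)"
    using eventually_ge_at_top[of "1::nat"]
  proof eventually_elim
    case (elim n)
    have p7: "n^6 \<le> n^7" using elim by (intro power_increasing) auto
    have "Suc n ^ 6 \<le> (2*n)^6" by (rule power_mono) (use elim in auto)
    also have "\<dots> = 64 * n^6" by (simp add: power_mult_distrib)
    also have "\<dots> \<le> 64 * n^7" using p7 by simp
    finally have "worst_time n \<le> 55 * (64 * n^7)" using worst_time_le[of n] by linarith
    then have "real (worst_time n) \<le> real (3520 * n^7)" by (simp only: of_nat_le_iff)
    then show ?case by simp
  qed
qed

end
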